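(* Let $m\ge 1$ and let $a_0,a_1,\dots,a_m$ be nonnegative integers, not all zero, and let $C_0>0$. Consider the problem of maximizing the score $S=\sum_{i=0}^{m} a_i m_i$ over real numbers $m_0,\dots,m_m\ge 0$ subject to the cost constraint $\frac12\sum_{i=0}^{m} a_i\, 2^i\, m_i^2\le C_0$. Then this problem has an optimal solution of the form $m_i=c\,2^{-i}$ for all $i=0,\dots,m$, for some constant $c>0$. That is, the proportional multiplicity assignment is optimal for every received word.
   Context: Setting: a Reed–Solomon code of length $N$ and dimension $K$ over $GF(2^m)$ whose symbols are sent as $m$ bits each over a binary erasure channel. A received symbol in which exactly $i$ bits are erased is said to be of type $i$; it is consistent with $2^i$ candidate symbols. In algebraic soft decoding (ASD), each of the $2^i$ candidates of a type-$i$ symbol receives the same real multiplicity $m_i\ge 0$. If the received word has $a_i$ symbols of type $i$, the score is $S=\sum_i a_i m_i$ and the (large-multiplicity approximation of the) cost is $C=\frac12\sum_i a_i 2^i m_i^2$. *)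

theory Defs
  imports "HOL-Analysis.Analysis"
begin

text \<open>Score S = sum_{i=0}^m a_i m_i and cost C = 1/2 sum_{i=0}^m a_i 2^i m_i^2,
  where a i is the number of received symbols of type i and mu i the multiplicity.\<close>

definition score :: "nat \<Rightarrow> (nat \<Rightarrow> nat) \<Rightarrow> (nat \<Rightarrow> real) \<Rightarrow> real" where
  "score m a mu = (\<Sum>i=0..m. real (a i) * mu i)"

definition cost :: "nat \<Rightarrow> (nat \<Rightarrow> nat) \<Rightarrow> (nat \<Rightarrow> real) \<Rightarrow> real" where
  "cost m a mu = (1/2) * (\<Sum>i=0..m. real (a i) * 2 ^ i * (mu i)^2)"

definition feasible :: "nat \<Rightarrow> (nat \<Rightarrow> nat) \<Rightarrow> real \<Rightarrow> (nat \<Rightarrow> real) \<Rightarrow> bool" where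
  "feasible m a C0 mu \<longleftrightarrow> (\<forall>i\<in>{0..m}. mu i \<ge> 0) \<and> cost m a mu \<le> C0"

end

theory Submission
  imports Defs
begin

lemma amgm_pt:
  fixes c x p :: real assumes "c > 0" "p > 0"
  shows "x \<le> (p * x^2 / c + c / p) / 2"
proof -
  have e: "(p * x^2 / c + c / p) / 2 - x = (p*x - c)^2 / (2*p*c)"
    using assms by (simp add: field_simps power2_eq_square)
  have "0 \<le> (p*x - c)^2 / (2*p*c)" using assms by simp
  thus ?thesis using e by linarith
qed

theorem lemma2:
  fixes m :: nat and a :: "nat \<Rightarrow> nat" and C0 :: real
  assumes "m \<ge> 1"
    and "\<exists>i\<in>{0..m}. a i \<noteq> 0"
    and "C0 > 0"
  shows "\<exists>c::real. c > 0 \<and>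
           feasible m a C0 (\<lambda>i. c / 2 ^ i) \<and>
           (\<forall>mu. feasible m a C0 mu \<longrightarrow> score m a mu \<le> score m a (\<lambda>i. c / 2 ^ i))"
proof -
  define W where "W = (\<Sum>i=0..m. real (a i) / 2^i)"
  obtain j where j: "j \<in> {0..m}" "a j \<noteq> 0" using assms(2) by blast
  have "real (a j) / 2^j \<le> W" unfolding W_def
    by (rule member_le_sum) (use j in auto)
  moreover have "real (a j) / 2^j > 0" using j by simp
  ultimately have Wpos: "W > 0" by linarith
  define c where "c = sqrt (2*C0/W)"
  have cpos: "c > 0" unfolding c_def using Wpos assms(3) by simp
  have c2: "c^2 * W = 2*C0" unfolding c_def using Wpos assms(3) by simp
  have sc: "score m a (\<lambda>i. c / 2 ^ i) = c * W"
    unfolding score_def W_def by (simp add: sum_distrib_left mult.commute)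
  have co: "cost m a (\<lambda>i. c / 2 ^ i) = c^2 * W / 2"
  proof -
    have e: "\<And>i. real (a i) * 2 ^ i * (c / 2 ^ i)^2 = c^2 * (real (a i) / 2^i)"
      by (simp add: power2_eq_square field_simps)
    have "(\<Sum>i=0..m. real (a i) * 2 ^ i * (c / 2 ^ i)^2) = c^2 * W"
      unfolding W_def sum_distrib_left by (rule sum.cong) (simp_all only: e)
    thus ?thesis unfolding cost_def by simp
  qed
  have feas: "feasible m a C0 (\<lambda>i. c / 2 ^ i)"
    unfolding feasible_def co using c2 cpos by auto
  have opt: "score m a mu \<le> c * W" if f: "feasible m a C0 mu" for mu
  proof -
    have cm: "(\<Sum>i=0..m. real (a i) * 2 ^ i * (mu i)^2) \<le> 2*C0"
      using f unfolding feasible_def cost_def by simp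
    have "score m a mu \<le> (\<Sum>i=0..m. real (a i) * ((2^i * (mu i)^2 / c + c / 2^i) / 2))"
      unfolding score_def
      by (rule sum_mono, rule mult_left_mono, rule amgm_pt) (use cpos in auto)
    also have "\<dots> = ((\<Sum>i=0..m. real (a i) * 2 ^ i * (mu i)^2) / c + c * W) / 2"
    proof -
      have e2: "\<And>i. real (a i) * ((2^i * (mu i)^2 / c + c / 2^i) / 2)
          = (1/(2*c)) * (real (a i) * 2 ^ i * (mu i)^2) + (c/2) * (real (a i) / 2^i)"
        using cpos by (simp add: field_simps)
      have "(\<Sum>i=0..m. real (a i) * ((2^i * (mu i)^2 / c + c / 2^i) / 2))
          = (\<Sum>i=0..m. (1/(2*c)) * (real (a i) * 2 ^ i * (mu i)^2) + (c/2) * (real (a i) / 2^i))"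
        by (rule sum.cong) (simp_all only: e2)
      also have "\<dots> = (1/(2*c)) * (\<Sum>i=0..m. real (a i) * 2 ^ i * (mu i)^2) + (c/2) * W"
        unfolding W_def sum.distrib sum_distrib_left by (rule refl)
      also have "\<dots> = ((\<Sum>i=0..m. real (a i) * 2 ^ i * (mu i)^2) / c + c * W) / 2"
        using cpos by (simp add: field_simps)
      finally show ?thesis .
    qed
    also have "\<dots> \<le> (2*C0 / c + c*W) / 2"
      using cm cpos by (simp add: divide_right_mono)
    also have "2*C0/c = c*W" using c2 cpos by (simp add: field_simps power2_eq_square)
    finally show ?thesis by (simp add: mult.commute)
  qed
  show ?thesis using cpos feas opt sc by auto
qed

end
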